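(* Consider the LSTM network with input $u\in\mathbb{R}^{n_u}$, state $\chi=(x,\xi)\in\mathbb{R}^{n_x}\times\mathbb{R}^{n_x}$ and output $y\in\mathbb{R}^{n_y}$: \[ \begin{aligned} x^+ &= \sigma_g(W_f u + U_f \xi + b_f)\circ x + \sigma_g(W_i u + U_i \xi + b_i)\circ \sigma_c(W_c u + U_c \xi + b_c),\\ \xi^+ &= \sigma_g(W_o u + U_o \xi + b_o)\circ \sigma_c(x^+),\\ y &= C\xi + b_y, \end{aligned} \] with inputs restricted to $\mathcal{U}=[-u_{\max},u_{\max}]^{n_u}$. Define \[ A=\begin{bmatrix}\bar{\sigma}_g^f & \bar{\sigma}_g^i\|U_c\|\\ \bar{\sigma}_g^o\bar{\sigma}_g^f & \bar{\sigma}_g^o\bar{\sigma}_g^i\|U_c\|\end{bmatrix}. \] If $\rho(A)<1$, then the network is input-to-state stable (ISS) with respect to the input $u$ and the bias $b_c$: there exist $\beta\in\mathcal{KL}$ and $\gamma_v,\gamma_b\in\mathcal{K}_\infty$ such that for every $k\in\mathbb{Z}_{\ge 0}$, every initial state $\chi_0\in\mathcal{X}$, and every input sequence $u(0),u(1),\dots$ with $u(\tau)\in\mathcal{U}$, \[ \|\chi(k)\|\le \beta(\|\chi_0\|,k)+\gamma_v\big(\max_{h\ge0}\|u(h)\|\big)+\gamma_b(\|b_c\|). \]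
   Context: $\sigma_g(t)=1/(1+e^{-t})$ and $\sigma_c(t)=\tanh(t)$ are applied entrywise; $\circ$ is the entrywise (Hadamard) product. $W_\star\in\mathbb{R}^{n_x\times n_u}$, $U_\star\in\mathbb{R}^{n_x\times n_x}$ ($\star\in\{f,i,o,c\}$), $C\in\mathbb{R}^{n_y\times n_x}$, $b_\star\in\mathbb{R}^{n_x}$, $b_y\in\mathbb{R}^{n_y}$. $\|\cdot\|$ is the Euclidean norm for vectors and the induced 2-norm for matrices; $\|\cdot\|_\infty$ is the induced $\infty$-norm (maximum absolute row sum); $\rho(\cdot)$ is the spectral radius. For $\star\in\{f,i,o\}$, $\bar{\sigma}_g^\star=\sigma_g\big(\|[\,W_\star u_{\max}\ \ U_\star\ \ b_\star\,]\|_\infty\big)$, where $[\cdot\ \cdot\ \cdot]$ is horizontal concatenation; $\bar{\sigma}_c^c=\sigma_c\big(\|[\,W_c u_{\max}\ \ U_c\ \ b_c\,]\|_\infty\big)$. The state set is $\mathcal{X}=\{(x,\xi): |x_{(j)}|\le \bar{\sigma}_g^i\bar{\sigma}_c^c/(1-\bar{\sigma}_g^f),\ \xi_{(j)}\in(-1,1),\ j=1,\dots,n_x\}$. A $\mathcal{K}$ function is continuous, strictly increasing, zero at zero; $\mathcal{K}_\infty$ additionally unbounded; $\beta\in\mathcal{KL}$ means $\beta(\cdot,k)\in\mathcal{K}$ for each $k$, $\beta(s,\cdot)$ strictly decreasing with $\beta(s,k)\to0$ as $k\to\infty$ for $s>0$. *)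

theory Defs
  imports "HOL-Analysis.Analysis"
begin

text \<open>Logistic sigmoid (gate activation).\<close>
definition sigmoid :: "real \<Rightarrow> real" where
  "sigmoid t = 1 / (1 + exp (- t))"

text \<open>Entrywise application and Hadamard product.\<close>
definition vmap :: "(real \<Rightarrow> real) \<Rightarrow> real ^ 'n \<Rightarrow> real ^ 'n" where
  "vmap f v = (\<chi> i. f (v $ i))"

definition hadamard :: "real ^ 'n \<Rightarrow> real ^ 'n \<Rightarrow> real ^ 'n" (infixl "\<circ>\<^sub>H" 70) where
  "a \<circ>\<^sub>H b = (\<chi> i. a $ i * b $ i)"

text \<open>Induced 2-norm of a matrix (Euclidean norm on vectors).\<close>
definition mat_norm2 :: "real ^ 'm ^ 'n \<Rightarrow> real" where
  "mat_norm2 M = onorm (\<lambda>v. M *v v)"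

text \<open>Induced \<infinity>-norm (maximum absolute row sum) of the horizontal concatenation
  [W * umax, U, b] of the matrix W scaled by the scalar umax, the matrix U and the column b.\<close>
definition inf_norm_concat ::
  "real ^ 'u ^ 'x \<Rightarrow> real \<Rightarrow> real ^ 'x ^ 'x \<Rightarrow> real ^ 'x \<Rightarrow> real" where
  "inf_norm_concat W umax U b =
     Max (range (\<lambda>i. (\<Sum>j\<in>UNIV. \<bar>W $ i $ j * umax\<bar>) + (\<Sum>j\<in>UNIV. \<bar>U $ i $ j\<bar>) + \<bar>b $ i\<bar>))"

text \<open>Spectral radius of a real square matrix: largest modulus of its (complex) eigenvalues,
  i.e. of the roots of the characteristic polynomial.\<close>
definition spectral_radius :: "real ^ 'n ^ 'n \<Rightarrow> real" where
  "spectral_radius A =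
     Max {cmod z | z. det ((mat z :: complex ^ 'n ^ 'n) - (\<chi> i j. complex_of_real (A $ i $ j))) = 0}"

text \<open>Comparison functions (on the domain [0,\<infinity>)).\<close>
definition class_K :: "(real \<Rightarrow> real) \<Rightarrow> bool" where
  "class_K f \<longleftrightarrow> continuous_on {0..} f \<and> strict_mono_on {0..} f \<and> f 0 = 0"

definition class_Kinf :: "(real \<Rightarrow> real) \<Rightarrow> bool" where
  "class_Kinf f \<longleftrightarrow> class_K f \<and> (\<forall>M. \<exists>s\<ge>0. f s > M)"

definition class_KL :: "(real \<Rightarrow> nat \<Rightarrow> real) \<Rightarrow> bool" where
  "class_KL \<beta> \<longleftrightarrow> (\<forall>k. class_K (\<lambda>s. \<beta> s k)) \<and>
     (\<forall>s>0. (\<forall>k1 k2. k1 < k2 \<longrightarrow> \<beta> s k2 < \<beta> s k1) \<and> (\<lambda>k. \<beta> s k) \<longlonglongrightarrow> 0)"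

text \<open>LSTM parameters (the output map C, b_y plays no role in the ISS claim).\<close>
record ('u, 'x) lstm =
  Wf :: "real ^ 'u ^ 'x"  Wi :: "real ^ 'u ^ 'x"  Wo :: "real ^ 'u ^ 'x"  Wc :: "real ^ 'u ^ 'x"
  Uf :: "real ^ 'x ^ 'x"  Ui :: "real ^ 'x ^ 'x"  Uo :: "real ^ 'x ^ 'x"  Uc :: "real ^ 'x ^ 'x"
  bf :: "real ^ 'x"  bi :: "real ^ 'x"  bo :: "real ^ 'x"  bc :: "real ^ 'x"

text \<open>One step of the LSTM state equation, state \<chi> = (x, \<xi>).\<close>
definition lstm_step ::
  "('u::finite, 'x::finite) lstm \<Rightarrow> real ^ 'u \<Rightarrow> (real ^ 'x) \<times> (real ^ 'x) \<Rightarrow> (real ^ 'x) \<times> (real ^ 'x)" where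
  "lstm_step N u s =
    (let x = fst s; \<xi> = snd s;
         x' = vmap sigmoid (Wf N *v u + Uf N *v \<xi> + bf N) \<circ>\<^sub>H x
              + vmap sigmoid (Wi N *v u + Ui N *v \<xi> + bi N) \<circ>\<^sub>H vmap tanh (Wc N *v u + Uc N *v \<xi> + bc N);
         \<xi>' = vmap sigmoid (Wo N *v u + Uo N *v \<xi> + bo N) \<circ>\<^sub>H vmap tanh x'
     in (x', \<xi>'))"

text \<open>State trajectory \<chi>(k) from initial state \<chi>0 under input sequence u.\<close>
primrec lstm_traj ::
  "('u::finite, 'x::finite) lstm \<Rightarrow> (nat \<Rightarrow> real ^ 'u) \<Rightarrow> (real ^ 'x) \<times> (real ^ 'x) \<Rightarrow> nat \<Rightarrow> (real ^ 'x) \<times> (real ^ 'x)" where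
  "lstm_traj N u s0 0 = s0"
| "lstm_traj N u s0 (Suc k) = lstm_step N (u k) (lstm_traj N u s0 k)"

text \<open>Gate bounds \<bar>\<sigma>\<close>
definition sbar_f :: "('u::finite, 'x::finite) lstm \<Rightarrow> real \<Rightarrow> real" where
  "sbar_f N umax = sigmoid (inf_norm_concat (Wf N) umax (Uf N) (bf N))"
definition sbar_i :: "('u::finite, 'x::finite) lstm \<Rightarrow> real \<Rightarrow> real" where
  "sbar_i N umax = sigmoid (inf_norm_concat (Wi N) umax (Ui N) (bi N))"
definition sbar_o :: "('u::finite, 'x::finite) lstm \<Rightarrow> real \<Rightarrow> real" where
  "sbar_o N umax = sigmoid (inf_norm_concat (Wo N) umax (Uo N) (bo N))"
definition sbar_c :: "('u::finite, 'x::finite) lstm \<Rightarrow> real \<Rightarrow> real" where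
  "sbar_c N umax = tanh (inf_norm_concat (Wc N) umax (Uc N) (bc N))"

text \<open>Input set U and state set X.\<close>
definition input_set :: "real \<Rightarrow> (real ^ 'u) set" where
  "input_set umax = {u. \<forall>j. \<bar>u $ j\<bar> \<le> umax}"

definition state_set :: "('u::finite, 'x::finite) lstm \<Rightarrow> real \<Rightarrow> ((real ^ 'x) \<times> (real ^ 'x)) set" where
  "state_set N umax = {(x, \<xi>). \<forall>j.
      \<bar>x $ j\<bar> \<le> sbar_i N umax * sbar_c N umax / (1 - sbar_f N umax) \<and> -1 < \<xi> $ j \<and> \<xi> $ j < 1}"

text \<open>The 2x2 matrix A.\<close>
definition iss_matrix :: "('u::finite, 'x::finite) lstm \<Rightarrow> real \<Rightarrow> real ^ 2 ^ 2" where
  "iss_matrix N umax =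
     vector [vector [sbar_f N umax, sbar_i N umax * mat_norm2 (Uc N)],
             vector [sbar_o N umax * sbar_f N umax, sbar_o N umax * sbar_i N umax * mat_norm2 (Uc N)]]"

end

theory Submission imports Defs begin
lemma tanh_le_self: "x \<ge> 0 \<Longrightarrow> tanh x \<le> (x::real)"
proof -
  assume x: "x \<ge> 0"
  have "0 - tanh 0 \<le> x - tanh x"
  proof (rule DERIV_nonneg_imp_nondecreasing[OF x])
    fix t :: real assume "0 \<le> t" "t \<le> x"
    have "cosh t \<noteq> 0" by (metis cosh_real_pos less_irrefl)
    hence "((\<lambda>t. t - tanh t) has_real_derivative (1 - (1 - tanh t ^ 2) * 1)) (at t)"
      by (intro derivative_intros) auto
    thus "\<exists>y. ((\<lambda>t. t - tanh t) has_real_derivative y) (at t) \<and> 0 \<le> y" by force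
  qed
  thus ?thesis by simp
qed
lemma abs_tanh_le: "\<bar>tanh x\<bar> \<le> \<bar>x::real\<bar>"
  by (metis abs_ge_zero tanh_le_self tanh_real_abs)
lemma abs_tanh_lt1: "\<bar>tanh (x::real)\<bar> < 1"
  using tanh_real_lt_1 tanh_real_gt_neg1 by (simp add: abs_less_iff)
lemma sigmoid_pos: "sigmoid t > 0" unfolding sigmoid_def by (simp add: add_pos_pos)
lemma sigmoid_nonneg: "0 \<le> sigmoid t" using sigmoid_pos less_imp_le by blast
lemma sigmoid_lt1: "sigmoid t < 1"
proof -
  have "1 < 1 + exp (-t)" by simp
  thus ?thesis unfolding sigmoid_def by (simp add: divide_less_eq_1 add_pos_pos)
qed
lemma sigmoid_mono: "s \<le> t \<Longrightarrow> sigmoid s \<le> sigmoid t"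
  unfolding sigmoid_def by (simp add: frac_le add_pos_pos)

lemma spec_ge:
  fixes a b c :: real
  shows "\<bar>a + c*b\<bar> \<le> spectral_radius (vector [vector [a, b], vector [c*a, c*b]] :: real^2^2)"
proof -
  let ?A = "vector [vector [a, b], vector [c*a, c*b]] :: real^2^2"
  define l where "l = a + c*b"
  have d: "det ((mat z :: complex^2^2) - (\<chi> i j. complex_of_real (?A $ i $ j))) = z * (z - complex_of_real l)" for z
    by (simp add: det_2 mat_def l_def algebra_simps)
  have sub: "{cmod z | z. det ((mat z :: complex ^ 2 ^ 2) - (\<chi> i j. complex_of_real (?A $ i $ j))) = 0} \<subseteq> {0, \<bar>l\<bar>}"
    unfolding d by auto
  have mem: "\<bar>l\<bar> \<in> {cmod z | z. det ((mat z :: complex ^ 2 ^ 2) - (\<chi> i j. complex_of_real (?A $ i $ j))) = 0}"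
    unfolding d by (rule CollectI, rule exI[of _ "complex_of_real l"]) simp
  show ?thesis unfolding spectral_radius_def l_def[symmetric]
    by (rule Max_ge[OF finite_subset[OF sub] mem]) simp
qed

lemma gate_bound:
  fixes W :: "real^'u::finite^'x::finite" and U :: "real^'x^'x"
  assumes u: "u \<in> input_set umax" and xi: "\<forall>j. \<bar>\<xi> $ j\<bar> \<le> 1"
  shows "sigmoid ((W *v u + U *v \<xi> + b) $ j) \<le> sigmoid (inf_norm_concat W umax U b)"
proof (rule sigmoid_mono)
  have um: "\<bar>u $ k\<bar> \<le> umax" for k using u by (simp add: input_set_def)
  have h1: "\<bar>(W *v u) $ j\<bar> \<le> (\<Sum>k\<in>UNIV. \<bar>W $ j $ k * umax\<bar>)"
  proof -
    have "\<bar>(W *v u) $ j\<bar> \<le> (\<Sum>k\<in>UNIV. \<bar>W $ j $ k * u $ k\<bar>)"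
      unfolding matrix_vector_mult_def by (simp add: sum_abs)
    also have "\<dots> \<le> (\<Sum>k\<in>UNIV. \<bar>W $ j $ k * umax\<bar>)"
      by (rule sum_mono) (metis abs_mult abs_ge_zero um mult_left_mono abs_of_nonneg order.trans)
    finally show ?thesis .
  qed
  have h2: "\<bar>(U *v \<xi>) $ j\<bar> \<le> (\<Sum>k\<in>UNIV. \<bar>U $ j $ k\<bar>)"
  proof -
    have "\<bar>(U *v \<xi>) $ j\<bar> \<le> (\<Sum>k\<in>UNIV. \<bar>U $ j $ k * \<xi> $ k\<bar>)"
      unfolding matrix_vector_mult_def by (simp add: sum_abs)
    also have "\<dots> \<le> (\<Sum>k\<in>UNIV. \<bar>U $ j $ k\<bar>)"
      by (rule sum_mono) (metis abs_mult abs_ge_zero xi mult_left_mono mult.right_neutral)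
    finally show ?thesis .
  qed
  have "(W *v u + U *v \<xi> + b) $ j \<le> (\<Sum>k\<in>UNIV. \<bar>W $ j $ k * umax\<bar>) + (\<Sum>k\<in>UNIV. \<bar>U $ j $ k\<bar>) + \<bar>b $ j\<bar>"
    using h1 h2 by simp
  also have "\<dots> \<le> inf_norm_concat W umax U b"
    unfolding inf_norm_concat_def by (rule Max_ge) auto
  finally show "(W *v u + U *v \<xi> + b) $ j \<le> inf_norm_concat W umax U b" .
qed

lemma had_norm:
  assumes "\<And>j. 0 \<le> g $ j \<and> g $ j \<le> c" "c \<ge> 0"
  shows "norm (g \<circ>\<^sub>H v) \<le> c * norm (v::real^'n::finite)"
proof -
  have "norm (g \<circ>\<^sub>H v) \<le> norm (c *\<^sub>R v)"
  proof (rule norm_le_componentwise_cart)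
    fix i
    have "\<bar>g $ i\<bar> * \<bar>v $ i\<bar> \<le> c * \<bar>v $ i\<bar>"
      using assms(1)[of i] by (intro mult_right_mono) auto
    thus "norm ((g \<circ>\<^sub>H v) $ i) \<le> norm ((c *\<^sub>R v) $ i)"
      using assms(2) by (simp add: hadamard_def abs_mult)
  qed
  thus ?thesis using assms(2) by simp
qed

lemma tanh_norm: "norm (vmap tanh v) \<le> norm (v::real^'n::finite)"
  by (rule norm_le_componentwise_cart) (simp add: vmap_def abs_tanh_le)

lemma step_bounds:
  fixes N :: "('u::finite, 'x::finite) lstm"
  assumes u: "u \<in> input_set umax" and xi: "\<forall>j. \<bar>snd s $ j\<bar> \<le> 1"
  shows "norm (fst (lstm_step N u s)) \<le> sbar_f N umax * norm (fst s)
           + sbar_i N umax * (onorm ((*v) (Wc N)) * norm u + mat_norm2 (Uc N) * norm (snd s) + norm (bc N))"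
    and "norm (snd (lstm_step N u s)) \<le> sbar_o N umax * norm (fst (lstm_step N u s))"
    and "\<forall>j. \<bar>snd (lstm_step N u s) $ j\<bar> \<le> 1"
proof -
  obtain x \<xi> where s: "s = (x, \<xi>)" by (cases s)
  have xi': "\<forall>j. \<bar>\<xi> $ j\<bar> \<le> 1" using xi s by simp
  define gf where "gf = vmap sigmoid (Wf N *v u + Uf N *v \<xi> + bf N)"
  define gi where "gi = vmap sigmoid (Wi N *v u + Ui N *v \<xi> + bi N)"
  define go where "go = vmap sigmoid (Wo N *v u + Uo N *v \<xi> + bo N)"
  define cc where "cc = Wc N *v u + Uc N *v \<xi> + bc N"
  define x' where "x' = gf \<circ>\<^sub>H x + gi \<circ>\<^sub>H vmap tanh cc"
  have st: "lstm_step N u s = (x', go \<circ>\<^sub>H vmap tanh x')"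
    unfolding lstm_step_def s x'_def gf_def gi_def go_def cc_def by (simp add: Let_def)
  have bf: "0 \<le> gf $ j \<and> gf $ j \<le> sbar_f N umax" for j
    unfolding gf_def sbar_f_def vmap_def using gate_bound[OF u xi'] sigmoid_nonneg by auto
  have bi: "0 \<le> gi $ j \<and> gi $ j \<le> sbar_i N umax" for j
    unfolding gi_def sbar_i_def vmap_def using gate_bound[OF u xi'] sigmoid_nonneg by auto
  have bo: "0 \<le> go $ j \<and> go $ j \<le> sbar_o N umax" for j
    unfolding go_def sbar_o_def vmap_def using gate_bound[OF u xi'] sigmoid_nonneg by auto
  have fpos: "sbar_f N umax \<ge> 0" "sbar_i N umax \<ge> 0" "sbar_o N umax \<ge> 0"
    unfolding sbar_f_def sbar_i_def sbar_o_def using sigmoid_nonneg by auto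
  have ccn: "norm cc \<le> onorm ((*v) (Wc N)) * norm u + mat_norm2 (Uc N) * norm \<xi> + norm (bc N)"
  proof -
    have "norm cc \<le> norm (Wc N *v u) + norm (Uc N *v \<xi>) + norm (bc N)"
      unfolding cc_def by (metis norm_triangle_le add_right_mono norm_triangle_ineq)
    also have "\<dots> \<le> onorm ((*v) (Wc N)) * norm u + mat_norm2 (Uc N) * norm \<xi> + norm (bc N)"
      unfolding mat_norm2_def
      using onorm[OF matrix_vector_mul_bounded_linear, of "Wc N" u]
            onorm[OF matrix_vector_mul_bounded_linear, of "Uc N" \<xi>] by simp
    finally show ?thesis .
  qed
  have "norm x' \<le> norm (gf \<circ>\<^sub>H x) + norm (gi \<circ>\<^sub>H vmap tanh cc)"
    unfolding x'_def by (rule norm_triangle_ineq)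
  also have "\<dots> \<le> sbar_f N umax * norm x + sbar_i N umax * norm (vmap tanh cc)"
    by (intro add_mono had_norm bf bi fpos)
  also have "\<dots> \<le> sbar_f N umax * norm x + sbar_i N umax * (onorm ((*v) (Wc N)) * norm u + mat_norm2 (Uc N) * norm \<xi> + norm (bc N))"
    using tanh_norm[of cc] ccn fpos by (intro add_left_mono mult_left_mono) auto
  finally show "norm (fst (lstm_step N u s)) \<le> sbar_f N umax * norm (fst s)
           + sbar_i N umax * (onorm ((*v) (Wc N)) * norm u + mat_norm2 (Uc N) * norm (snd s) + norm (bc N))"
    using st s by simp
  have "norm (go \<circ>\<^sub>H vmap tanh x') \<le> sbar_o N umax * norm (vmap tanh x')"
    by (intro had_norm bo fpos)
  also have "\<dots> \<le> sbar_o N umax * norm x'"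
    using tanh_norm[of x'] fpos by (intro mult_left_mono) auto
  finally show "norm (snd (lstm_step N u s)) \<le> sbar_o N umax * norm (fst (lstm_step N u s))"
    using st by simp
  show "\<forall>j. \<bar>snd (lstm_step N u s) $ j\<bar> \<le> 1"
  proof
    fix j
    have "\<bar>go $ j\<bar> \<le> 1" using bo[of j] sigmoid_lt1[of "inf_norm_concat (Wo N) umax (Uo N) (bo N)"]
      unfolding sbar_o_def by auto
    moreover have "\<bar>tanh (x' $ j)\<bar> \<le> 1" using abs_tanh_lt1 less_imp_le by blast
    ultimately have "\<bar>go $ j\<bar> * \<bar>tanh (x' $ j)\<bar> \<le> 1 * 1"
      by (intro mult_mono) auto
    thus "\<bar>snd (lstm_step N u s) $ j\<bar> \<le> 1" using st by (simp add: hadamard_def vmap_def abs_mult)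
  qed
qed

lemma Kinf_lin: "a > 0 \<Longrightarrow> class_Kinf (\<lambda>s. a * s)"
  unfolding class_Kinf_def class_K_def
proof (intro conjI allI)
  assume a: "a > 0"
  show "continuous_on {0..} (\<lambda>s. a * s)" by (intro continuous_intros)
  show "strict_mono_on {0..} (\<lambda>s. a * s)" using a by (auto simp: strict_mono_on_def)
  show "a * 0 = 0" by simp
  fix M :: real
  show "\<exists>s\<ge>0. a * s > M"
  proof (intro exI conjI)
    show "0 \<le> \<bar>M\<bar> / a + 1" using a by simp
    have "a * (\<bar>M\<bar> / a + 1) = \<bar>M\<bar> + a" using a by (simp add: field_simps)
    thus "a * (\<bar>M\<bar> / a + 1) > M" using a by simp
  qed
qed

lemma KL_exp: "c > 0 \<Longrightarrow> 0 < l \<Longrightarrow> l < 1 \<Longrightarrow> class_KL (\<lambda>s k. c * l ^ k * s)"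
  unfolding class_KL_def class_K_def
proof (intro conjI allI impI)
  assume c: "c > 0" and l: "0 < l" "l < 1"
  fix k
  show "continuous_on {0..} (\<lambda>s. c * l ^ k * s)" by (intro continuous_intros)
  show "strict_mono_on {0..} (\<lambda>s. c * l ^ k * s)" using c l by (auto simp: strict_mono_on_def)
  show "c * l ^ k * 0 = 0" by simp
next
  assume c: "c > 0" and l: "0 < l" "l < 1"
  fix s :: real assume s: "s > 0"
  fix k1 k2 :: nat assume "k1 < k2"
  hence "l ^ k2 < l ^ k1" using l by (intro power_strict_decreasing) auto
  thus "c * l ^ k2 * s < c * l ^ k1 * s" using c s by simp
next
  assume c: "c > 0" and l: "0 < l" "l < 1"
  fix s :: real
  have "(\<lambda>k. l ^ k) \<longlonglongrightarrow> 0" by (rule LIMSEQ_power_zero) (use l in simp)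
  hence "(\<lambda>k. c * l ^ k * s) \<longlonglongrightarrow> c * 0 * s" by (intro tendsto_mult tendsto_const)
  thus "(\<lambda>k. c * l ^ k * s) \<longlonglongrightarrow> 0" by simp
qed

theorem theorem1:
  fixes N :: "('u::finite, 'x::finite) lstm" and umax :: real
  assumes "spectral_radius (iss_matrix N umax) < 1"
  shows "\<exists>\<beta> \<gamma>v \<gamma>b. class_KL \<beta> \<and> class_Kinf \<gamma>v \<and> class_Kinf \<gamma>b \<and>
    (\<forall>k \<chi>0 u. \<chi>0 \<in> state_set N umax \<longrightarrow> (\<forall>t. u t \<in> input_set umax) \<longrightarrow>
       norm (lstm_traj N u \<chi>0 k)
         \<le> \<beta> (norm \<chi>0) k + \<gamma>v (SUP h. norm (u h)) + \<gamma>b (norm (bc N)))"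
proof -
  define sf where "sf = sbar_f N umax"
  define si where "si = sbar_i N umax"
  define so where "so = sbar_o N umax"
  define nU where "nU = mat_norm2 (Uc N)"
  define K where "K = onorm ((*v) (Wc N))"
  define l where "l = sf + so * (si * nU)"
  have sf: "0 < sf" "sf < 1" unfolding sf_def sbar_f_def using sigmoid_pos sigmoid_lt1 by auto
  have si: "0 < si" "si < 1" unfolding si_def sbar_i_def using sigmoid_pos sigmoid_lt1 by auto
  have so: "0 < so" "so < 1" unfolding so_def sbar_o_def using sigmoid_pos sigmoid_lt1 by auto
  have nU: "nU \<ge> 0" unfolding nU_def mat_norm2_def by (rule onorm_pos_le) simp
  have K: "K \<ge> 0" unfolding K_def by (rule onorm_pos_le) simp
  have l0: "0 < l" unfolding l_def using sf si so nU by (simp add: add_pos_nonneg)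
  have l1: "l < 1"
  proof -
    have "\<bar>sf + so * (si * nU)\<bar> \<le> spectral_radius (iss_matrix N umax)"
      using spec_ge[of sf so "si * nU"]
      unfolding iss_matrix_def sf_def si_def so_def nU_def by (simp add: mult.assoc)
    thus ?thesis using assms l_def by simp
  qed
  define c where "c = 2 * (1 + nU) / l"
  define Q where "Q = 2 * si * (1 / (1 - l) + 1)"
  have c: "c \<ge> 2" unfolding c_def using l0 l1 nU by (simp add: field_simps)
  have Q: "Q \<ge> 0" unfolding Q_def using si l1 by simp
  show ?thesis
  proof (intro exI conjI allI impI)
    show "class_KL (\<lambda>s k. c * l ^ k * s)" using KL_exp c l0 l1 by simp
    show "class_Kinf (\<lambda>s. (Q * K + 1) * s)" using Kinf_lin Q K by (simp add: add_nonneg_pos)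
    show "class_Kinf (\<lambda>s. (Q + 1) * s)" using Kinf_lin Q by simp
    fix k :: nat and \<chi>0 :: "(real^'x) \<times> (real^'x)" and u :: "nat \<Rightarrow> real^'u"
    assume x0: "\<chi>0 \<in> state_set N umax" and u: "\<forall>t. u t \<in> input_set umax"
    define S where "S = (SUP h. norm (u h))"
    have bdd: "bdd_above (range (\<lambda>h. norm (u h)))"
    proof (rule bdd_aboveI2)
      fix h
      have "norm (u h) \<le> (\<Sum>j\<in>UNIV. \<bar>u h $ j\<bar>)" by (rule norm_le_l1_cart)
      also have "\<dots> \<le> of_nat (card (UNIV :: 'u set)) * umax"
        using u[rule_format, of h] unfolding input_set_def
        by (intro sum_bounded_above) (simp add: mult.commute)
      finally show "norm (u h) \<le> of_nat (card (UNIV :: 'u set)) * umax" .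
    qed
    have uS: "norm (u h) \<le> S" for h unfolding S_def using cSUP_upper[OF UNIV_I bdd] .
    have S0: "S \<ge> 0" using uS[of 0] norm_ge_zero order.trans by blast
    define tr where "tr = lstm_traj N u \<chi>0"
    have inv: "\<forall>j. \<bar>snd (tr k) $ j\<bar> \<le> 1" for k
    proof (induction k)
      case 0 thus ?case using x0 unfolding tr_def state_set_def
        by (cases \<chi>0) (auto simp: abs_le_iff less_imp_le)
    next
      case (Suc k) thus ?case unfolding tr_def using step_bounds(3)[OF u[rule_format]] by simp
    qed
    define a where "a k = norm (fst (tr k))" for k
    define b where "b k = norm (snd (tr k))" for k
    define r where "r k = sf * a k + si * nU * b k" for k
    define e where "e = K * S + norm (bc N)"
    define G where "G = si * e / (1 - l)"
    have e0: "e \<ge> 0" unfolding e_def using K S0 by simp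
    have G0: "G \<ge> 0" unfolding G_def using si e0 l1 by simp
    have a_step: "a (Suc k) \<le> r k + si * e" for k
    proof -
      have "a (Suc k) \<le> sf * a k + si * (K * norm (u k) + nU * b k + norm (bc N))"
        using step_bounds(1)[OF u[rule_format] inv[of k], of N]
        unfolding a_def b_def tr_def sf_def si_def K_def nU_def by simp
      also have "\<dots> \<le> sf * a k + si * (K * S + nU * b k + norm (bc N))"
        using si K uS[of k] by (intro add_left_mono mult_left_mono add_right_mono) auto
      finally show ?thesis unfolding r_def e_def by (simp add: algebra_simps)
    qed
    have b_step: "b (Suc k) \<le> so * a (Suc k)" for k
      using step_bounds(2)[OF u[rule_format] inv[of k], of N]
      unfolding a_def b_def tr_def so_def by simp
    have r_step: "r (Suc k) \<le> l * (r k + si * e)" for k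
    proof -
      have "r (Suc k) \<le> sf * a (Suc k) + si * nU * (so * a (Suc k))"
        unfolding r_def using b_step[of k] si nU by (intro add_left_mono mult_left_mono) auto
      also have "\<dots> = l * a (Suc k)" unfolding l_def by (simp add: algebra_simps)
      also have "\<dots> \<le> l * (r k + si * e)" using a_step[of k] l0 by simp
      finally show ?thesis .
    qed
    have r_bound: "r k \<le> l ^ k * r 0 + G" for k
    proof (induction k)
      case 0 thus ?case using G0 by simp
    next
      case (Suc k)
      have "r (Suc k) \<le> l * (r k + si * e)" by (rule r_step)
      also have "\<dots> \<le> l * (l ^ k * r 0 + G + si * e)" using Suc l0 by simp
      also have "\<dots> \<le> l ^ Suc k * r 0 + G"
      proof -
        have "l * (si * e) \<le> si * e" using l1 l0 si e0 mult_left_le_one_le[of "si * e" l] by simp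
        moreover have "si * e = (1 - l) * G" unfolding G_def using l1 by simp
        ultimately have "l * G + l * (si * e) \<le> G" by (simp add: algebra_simps)
        thus ?thesis by (simp add: algebra_simps)
      qed
      finally show ?case .
    qed
    have r0: "r 0 \<le> (1 + nU) * norm \<chi>0"
    proof -
      have "a 0 \<le> norm \<chi>0" "b 0 \<le> norm \<chi>0" unfolding a_def b_def tr_def
        by (metis lstm_traj.simps(1) norm_fst_le prod.collapse, metis lstm_traj.simps(1) norm_snd_le prod.collapse)
      moreover have "sf * a 0 \<le> a 0" using sf a_def by (simp add: mult_left_le_one_le)
      moreover have "si * nU * b 0 \<le> nU * b 0"
      proof -
        have "0 \<le> nU * b 0" using nU b_def by simp
        thus ?thesis using si mult_left_le_one_le[of "nU * b 0" si] by (simp add: mult.assoc)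
      qed
      moreover have "nU * b 0 \<le> nU * norm \<chi>0" using nU calculation(2) by (simp add: mult_left_mono)
      ultimately show ?thesis unfolding r_def by (simp add: algebra_simps)
    qed
    have key: "norm (tr k) \<le> c * l ^ k * norm \<chi>0 + Q * e"
    proof (cases k)
      case 0
      have "norm \<chi>0 \<le> c * norm \<chi>0" using c by (simp add: mult_le_cancel_right1)
      moreover have "Q * e \<ge> 0" using Q e0 by simp
      ultimately show ?thesis using 0 unfolding tr_def by simp
    next
      case (Suc m)
      have "norm (tr k) \<le> a k + b k" unfolding a_def b_def by (metis norm_Pair_le prod.collapse)
      also have "\<dots> \<le> 2 * a k" using b_step[of m] so Suc a_def
        by (smt (verit) mult_left_le_one_le norm_ge_zero)
      also have "\<dots> \<le> 2 * (l ^ m * r 0 + G + si * e)" using a_step[of m] r_bound[of m] Suc by simp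
      also have "\<dots> \<le> 2 * (l ^ m * ((1 + nU) * norm \<chi>0) + G + si * e)"
        using r0 l0 by (simp add: mult_left_mono)
      also have "\<dots> = c * l ^ k * norm \<chi>0 + Q * e"
        unfolding c_def Q_def G_def Suc using l0 l1 by (simp add: field_simps)
      finally show ?thesis .
    qed
    have "Q * e \<le> (Q * K + 1) * S + (Q + 1) * norm (bc N)"
      unfolding e_def using S0 Q by (simp add: algebra_simps)
    thus "norm (lstm_traj N u \<chi>0 k) \<le> c * l ^ k * norm \<chi>0 + (Q * K + 1) * (SUP h. norm (u h)) + (Q + 1) * norm (bc N)"
      using key unfolding tr_def S_def by simp
  qed
qed
end
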